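(* Let $q$ be a prime power, $s,\ell$ positive integers with $q\equiv 1\pmod{\ell}$, and let $\alpha\in\{1,-1\}\subseteq\mathbb{F}_q$. Assume $\gcd(s,q)=1$, and that $s$ is odd if $\alpha=-1$. Then no two-dimensional $(\alpha,1)$-constacyclic code of length $s.\ell$ over $\mathbb{F}_q$, i.e. no ideal $\mathcal{C}$ of $\mathbb{F}_q[x,y]/\langle x^s-\alpha,\,y^\ell-1\rangle$, is self-dual.
   Context: Elements of $\mathbb{F}_q[x,y]/\langle x^s-\alpha,y^\ell-1\rangle$ are identified with vectors $(c_{i,j})$ of length $s\ell$ via the coefficients of $x^iy^j$ ($0\le i\le s-1$, $0\le j\le\ell-1$). Self-dual means $\mathcal{C}=\mathcal{C}^\perp$ with respect to the Euclidean inner product $\sum_{i,j}c_{i,j}d_{i,j}$. *)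

theory Defs
  imports Main "HOL-Library.Cardinality"
begin

text \<open>Elements of F[x,y]/<x^s - alpha, y^l - 1> are represented by their
coefficient arrays c i j (coefficient of x^i y^j), 0 <= i < s, 0 <= j < l,
extended by 0 outside this box.\<close>

definition amb :: "nat \<Rightarrow> nat \<Rightarrow> (nat \<Rightarrow> nat \<Rightarrow> 'a::zero) set" where
  "amb s l = {c. \<forall>i j. (s \<le> i \<or> l \<le> j) \<longrightarrow> c i j = 0}"

definition cadd :: "(nat \<Rightarrow> nat \<Rightarrow> 'a::plus) \<Rightarrow> (nat \<Rightarrow> nat \<Rightarrow> 'a) \<Rightarrow> nat \<Rightarrow> nat \<Rightarrow> 'a" where
  "cadd a b = (\<lambda>i j. a i j + b i j)"

text \<open>Multiplication in the quotient ring: x^(i1+i2) = alpha^((i1+i2) div s) x^((i1+i2) mod s),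
y^(j1+j2) = y^((j1+j2) mod l).\<close>
definition cmult :: "nat \<Rightarrow> nat \<Rightarrow> 'a::comm_ring_1 \<Rightarrow> (nat \<Rightarrow> nat \<Rightarrow> 'a) \<Rightarrow> (nat \<Rightarrow> nat \<Rightarrow> 'a) \<Rightarrow> nat \<Rightarrow> nat \<Rightarrow> 'a" where
  "cmult s l \<alpha> a b = (\<lambda>i j. if i < s \<and> j < l then
      (\<Sum>i1<s. \<Sum>j1<l. \<Sum>i2<s. \<Sum>j2<l.
         (if (i1 + i2) mod s = i \<and> (j1 + j2) mod l = j
          then \<alpha> ^ ((i1 + i2) div s) * a i1 j1 * b i2 j2 else 0))
      else 0)"

definition is_ideal :: "nat \<Rightarrow> nat \<Rightarrow> 'a::comm_ring_1 \<Rightarrow> (nat \<Rightarrow> nat \<Rightarrow> 'a) set \<Rightarrow> bool" where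
  "is_ideal s l \<alpha> C \<longleftrightarrow> C \<subseteq> amb s l \<and> (\<lambda>i j. 0) \<in> C
     \<and> (\<forall>a\<in>C. \<forall>b\<in>C. cadd a b \<in> C)
     \<and> (\<forall>r\<in>amb s l. \<forall>a\<in>C. cmult s l \<alpha> r a \<in> C)"

definition einner :: "nat \<Rightarrow> nat \<Rightarrow> (nat \<Rightarrow> nat \<Rightarrow> 'a::comm_ring_1) \<Rightarrow> (nat \<Rightarrow> nat \<Rightarrow> 'a) \<Rightarrow> 'a" where
  "einner s l c d = (\<Sum>i<s. \<Sum>j<l. c i j * d i j)"

definition dual_code :: "nat \<Rightarrow> nat \<Rightarrow> (nat \<Rightarrow> nat \<Rightarrow> 'a::comm_ring_1) set \<Rightarrow> (nat \<Rightarrow> nat \<Rightarrow> 'a) set" where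
  "dual_code s l C = {d \<in> amb s l. \<forall>c\<in>C. einner s l c d = 0}"

definition self_dual :: "nat \<Rightarrow> nat \<Rightarrow> (nat \<Rightarrow> nat \<Rightarrow> 'a::comm_ring_1) set \<Rightarrow> bool" where
  "self_dual s l C \<longleftrightarrow> C = dual_code s l C"

end

theory Submission
  imports Defs "HOL-Number_Theory.Residues"
begin

lemma sum_mod_delta1:
  fixes f :: "nat \<Rightarrow> 'a::comm_ring_1"
  assumes s: "0 < s" and i: "i < s"
    and K: "\<And>i2. i2 < s \<Longrightarrow> (i1 + i2) mod s = i \<Longrightarrow> f i2 = K"
  shows "(\<Sum>i2<s. if (i1 + i2) mod s = i then f i2 else 0) = K"
proof -
  define i0 where "i0 = (i + s - i1 mod s) mod s"
  have i0s: "i0 < s" using s by (simp add: i0_def)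
  have i0m: "(i1 + i0) mod s = i"
  proof -
    have "(i1 + i0) mod s = (i1 mod s + (i + s - i1 mod s)) mod s"
      unfolding i0_def by (metis mod_add_eq mod_mod_trivial)
    also have "i1 mod s + (i + s - i1 mod s) = i + s"
      using mod_less_divisor[OF s, of i1] by linarith
    finally show ?thesis using i by simp
  qed
  have uniq: "x = i0" if "x < s" "(i1 + x) mod s = i" for x
  proof -
    have "[i1 + x = i1 + i0] (mod s)" using that i0m by (simp add: cong_def)
    then have "[x = i0] (mod s)" by (simp add: cong_add_lcancel_nat)
    then show ?thesis using that i0s by (simp add: cong_def)
  qed
  have "{i2\<in>{..<s}. (i1 + i2) mod s = i} = {i0}" using uniq i0s i0m by blast
  then have "(\<Sum>i2<s. if (i1 + i2) mod s = i then f i2 else 0) = (\<Sum>i2\<in>{i0}. f i2)"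
    by (simp add: sum.inter_filter[symmetric])
  also have "\<dots> = K" using K i0s i0m by simp
  finally show ?thesis .
qed

lemma sum_mod_delta2:
  fixes f :: "nat \<Rightarrow> nat \<Rightarrow> 'a::comm_ring_1"
  assumes s: "0 < s" and i: "i < s" and l: "0 < l" and j: "j < l"
    and K: "\<And>i2 j2. i2 < s \<Longrightarrow> j2 < l \<Longrightarrow> (i1 + i2) mod s = i \<Longrightarrow> (j1 + j2) mod l = j \<Longrightarrow> f i2 j2 = K"
  shows "(\<Sum>i2<s. \<Sum>j2<l. if (i1 + i2) mod s = i \<and> (j1 + j2) mod l = j then f i2 j2 else 0) = K"
proof -
  have "(\<Sum>i2<s. \<Sum>j2<l. if (i1 + i2) mod s = i \<and> (j1 + j2) mod l = j then f i2 j2 else 0)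
      = (\<Sum>i2<s. if (i1 + i2) mod s = i then K else 0)"
  proof (rule sum.cong[OF refl])
    fix i2 assume "i2 \<in> {..<s}"
    then show "(\<Sum>j2<l. if (i1 + i2) mod s = i \<and> (j1 + j2) mod l = j then f i2 j2 else 0)
      = (if (i1 + i2) mod s = i then K else 0)"
      using sum_mod_delta1[OF l j, of j1 "f i2" K] K by auto
  qed
  also have "\<dots> = K" using sum_mod_delta1[OF s i, of i1 "\<lambda>_. K" K] by simp
  finally show ?thesis .
qed

lemma cmult_comm: "cmult s l \<alpha> a b = cmult s l \<alpha> b a"
proof -
  have "(\<Sum>i1<s. \<Sum>j1<l. \<Sum>i2<s. \<Sum>j2<l. F i1 j1 i2 j2) =
        (\<Sum>i2<s. \<Sum>j2<l. \<Sum>i1<s. \<Sum>j1<l. F i1 j1 i2 j2)" for F :: "nat \<Rightarrow> nat \<Rightarrow> nat \<Rightarrow> nat \<Rightarrow> 'a"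
  proof -
    have "(\<Sum>i1<s. \<Sum>j1<l. \<Sum>i2<s. \<Sum>j2<l. F i1 j1 i2 j2) =
        (\<Sum>i1<s. \<Sum>i2<s. \<Sum>j1<l. \<Sum>j2<l. F i1 j1 i2 j2)"
      by (rule sum.cong[OF refl], rule sum.swap)
    also have "\<dots> = (\<Sum>i2<s. \<Sum>i1<s. \<Sum>j1<l. \<Sum>j2<l. F i1 j1 i2 j2)"
      by (rule sum.swap)
    also have "\<dots> = (\<Sum>i2<s. \<Sum>i1<s. \<Sum>j2<l. \<Sum>j1<l. F i1 j1 i2 j2)"
      by (rule sum.cong[OF refl], rule sum.cong[OF refl], rule sum.swap)
    also have "\<dots> = (\<Sum>i2<s. \<Sum>j2<l. \<Sum>i1<s. \<Sum>j1<l. F i1 j1 i2 j2)"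
      by (intro sum.cong[OF refl], rule sum.swap)
    finally show ?thesis .
  qed
  note sw = this
  show ?thesis
  proof (intro ext)
    fix i j
    define G where "G = (\<lambda>i1 j1 i2 j2. if (i1 + i2) mod s = i \<and> (j1 + j2) mod l = j
          then \<alpha> ^ ((i1 + i2) div s) * b i1 j1 * a i2 j2 else 0)"
    have "(\<Sum>i1<s. \<Sum>j1<l. \<Sum>i2<s. \<Sum>j2<l. if (i1 + i2) mod s = i \<and> (j1 + j2) mod l = j
          then \<alpha> ^ ((i1 + i2) div s) * a i1 j1 * b i2 j2 else 0)
       = (\<Sum>i1<s. \<Sum>j1<l. \<Sum>i2<s. \<Sum>j2<l. G i2 j2 i1 j1)"
      unfolding G_def by (intro sum.cong refl) (simp add: add.commute ac_simps)
    also have "\<dots> = (\<Sum>i1<s. \<Sum>j1<l. \<Sum>i2<s. \<Sum>j2<l. G i1 j1 i2 j2)"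
      by (rule sw[symmetric])
    finally show "cmult s l \<alpha> a b i j = cmult s l \<alpha> b a i j"
      unfolding cmult_def G_def by simp
  qed
qed

theorem theorem5:
  fixes \<alpha> :: "'a::{field, finite}"
    and s l :: nat
    and C :: "(nat \<Rightarrow> nat \<Rightarrow> 'a) set"
  assumes "0 < s" and "0 < l"
    and "CARD('a) mod l = 1 mod l"
    and "\<alpha> = 1 \<or> \<alpha> = -1"
    and "coprime s (CARD('a))"
    and "\<alpha> = -1 \<Longrightarrow> odd s"
    and "is_ideal s l \<alpha> C"
  shows "\<not> self_dual s l C"
proof
  assume sd: "self_dual s l C"
  note s = assms(1) and l = assms(2)
  have as: "\<alpha> ^ s = \<alpha>" using assms(4,6) by (auto simp: power_minus_odd)
  have aa: "\<alpha> * \<alpha> = 1" using assms(4) by auto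
  have aa2: "\<alpha> ^ k * \<alpha> ^ k = 1" for k by (metis aa power_mult_distrib power_one)
  define w :: "nat \<Rightarrow> nat \<Rightarrow> 'a" where "w = (\<lambda>i j. if i < s \<and> j < l then \<alpha> ^ i else 0)"
  have wamb: "w \<in> amb s l" by (auto simp: amb_def w_def)
  define \<phi> where "\<phi> c = einner s l c w" for c
  have phi: "\<phi> c = (\<Sum>i1<s. \<Sum>j1<l. c i1 j1 * \<alpha> ^ i1)" for c
    unfolding \<phi>_def einner_def w_def by simp
  have key: "cmult s l \<alpha> c w = (\<lambda>i j. \<phi> c * w i j)" for c
  proof (intro ext)
    fix i j
    show "cmult s l \<alpha> c w i j = \<phi> c * w i j"
    proof (cases "i < s \<and> j < l")
      case False then show ?thesis by (auto simp: cmult_def w_def)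
    next
      case True
      have "cmult s l \<alpha> c w i j = (\<Sum>i1<s. \<Sum>j1<l. c i1 j1 * \<alpha> ^ i1 * \<alpha> ^ i)"
        unfolding cmult_def using True
      proof (simp only: True simp_thms if_True, intro sum.cong[OF refl])
        fix i1 j1 assume "i1 \<in> {..<s}" "j1 \<in> {..<l}"
        show "(\<Sum>i2<s. \<Sum>j2<l. if (i1 + i2) mod s = i \<and> (j1 + j2) mod l = j
              then \<alpha> ^ ((i1 + i2) div s) * c i1 j1 * w i2 j2 else 0) = c i1 j1 * \<alpha> ^ i1 * \<alpha> ^ i"
        proof (rule sum_mod_delta2[OF s _ l])
          fix i2 j2 assume h: "i2 < s" "j2 < l" "(i1 + i2) mod s = i" "(j1 + j2) mod l = j"
          have e1: "\<alpha> ^ ((i1 + i2) div s) * \<alpha> ^ i = \<alpha> ^ (i1 + i2)"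
          proof -
            have "\<alpha> ^ (i1 + i2) = \<alpha> ^ (s * ((i1 + i2) div s) + (i1 + i2) mod s)" by simp
            also have "\<dots> = \<alpha> ^ ((i1 + i2) div s) * \<alpha> ^ i"
              by (simp add: power_add power_mult as h(3))
            finally show ?thesis by simp
          qed
          have "\<alpha> ^ ((i1 + i2) div s) * \<alpha> ^ i2 = \<alpha> ^ ((i1 + i2) div s) * \<alpha> ^ i2 * (\<alpha> ^ i * \<alpha> ^ i)"
            by (simp add: aa2)
          also have "\<dots> = \<alpha> ^ (i1 + i2) * \<alpha> ^ i2 * \<alpha> ^ i"
            by (simp add: e1[symmetric] ac_simps)
          also have "\<dots> = \<alpha> ^ i1 * \<alpha> ^ i"
            by (simp add: power_add ac_simps aa2)
          finally have "\<alpha> ^ ((i1 + i2) div s) * \<alpha> ^ i2 = \<alpha> ^ i1 * \<alpha> ^ i" .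
          then show "\<alpha> ^ ((i1 + i2) div s) * c i1 j1 * w i2 j2 = c i1 j1 * \<alpha> ^ i1 * \<alpha> ^ i"
            using h by (simp add: w_def ac_simps)
        qed (use True in auto)
      qed
      also have "\<dots> = \<phi> c * w i j"
        using True by (simp add: phi w_def sum_distrib_right)
      finally show ?thesis .
    qed
  qed
  have ww: "einner s l w w = of_nat (s * l)"
  proof -
    have "einner s l w w = (\<Sum>i<s. \<Sum>j<l. (1::'a))"
      unfolding einner_def w_def by (intro sum.cong refl) (simp add: aa2)
    then show ?thesis by simp
  qed
  have cop: "coprime (s * l) CARD('a)"
  proof -
    have "coprime l CARD('a)"
    proof -
      have "gcd l CARD('a) = gcd l (CARD('a) mod l)" by (metis gcd_red_nat gcd.commute)
      also have "\<dots> = gcd l (1 mod l)" using assms(3) by simp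
      also have "\<dots> = 1" by (metis gcd_1_nat gcd_red_nat gcd.commute)
      finally show ?thesis by (simp add: coprime_iff_gcd_eq_1)
    qed
    then show ?thesis using assms(5) by simp
  qed
  have nz: "(of_nat (s * l) :: 'a) \<noteq> 0"
  proof
    assume "(of_nat (s * l) :: 'a) = 0"
    then have "CHAR('a) dvd s * l" by (simp only: of_nat_eq_0_iff_char_dvd)
    moreover have "CHAR('a) dvd CARD('a)" by (rule CHAR_dvd_CARD)
    ultimately have "CHAR('a) dvd 1" using cop by (meson coprime_common_divisor)
    then have "(of_nat 1 :: 'a) = 0" by (simp only: of_nat_eq_0_iff_char_dvd)
    then show False by simp
  qed
  have id: "is_ideal s l \<alpha> C" by fact
  have Cd: "C = dual_code s l C" using sd by (simp add: self_dual_def)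
  show False
  proof (cases "\<exists>c\<in>C. \<phi> c \<noteq> 0")
    case True
    then obtain c where c: "c \<in> C" "\<phi> c \<noteq> 0" by blast
    have "cmult s l \<alpha> w c \<in> C" using id wamb c(1) by (auto simp: is_ideal_def)
    moreover have "cmult s l \<alpha> w c = (\<lambda>i j. \<phi> c * w i j)"
      by (metis cmult_comm key)
    ultimately have vC: "(\<lambda>i j. \<phi> c * w i j) \<in> C" by simp
    then have "(\<lambda>i j. \<phi> c * w i j) \<in> dual_code s l C" using Cd by simp
    then have "einner s l (\<lambda>i j. \<phi> c * w i j) (\<lambda>i j. \<phi> c * w i j) = 0"
      using vC by (auto simp: dual_code_def)
    moreover have "einner s l (\<lambda>i j. \<phi> c * w i j) (\<lambda>i j. \<phi> c * w i j) = \<phi> c * \<phi> c * einner s l w w"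
    proof -
      have "\<And>i j. (\<phi> c * w i j) * (\<phi> c * w i j) = (\<phi> c * \<phi> c) * (w i j * w i j)"
        by (simp only: ac_simps)
      then show ?thesis unfolding einner_def by (simp only: sum_distrib_left)
    qed
    ultimately show False using ww nz c(2) by simp
  next
    case False
    then have "w \<in> dual_code s l C" using wamb
      by (auto simp: dual_code_def \<phi>_def)
    then have "w \<in> C" using Cd by simp
    then have "\<phi> w = 0" using False by blast
    then show False using ww nz by (simp add: \<phi>_def)
  qed
qed

end
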